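(* Let $\alpha>0$ and let $n$ be a positive integer with $\alpha n>1$. Let $q\in\mathbb{C}$ satisfy $0<|q|\leq 1-1/(\alpha n)$ and let $z\in\mathbb{C}$ satisfy $|z|=|q|^{-n-1/2}$. Then $U:=\prod_{m=1}^{\infty}(1+zq^m)$ satisfies $$|U|\geq |q|^{-n^2/2}e^{-(\pi^2/3)(\alpha n(\alpha n-1))^{1/2}}.$$ *)

theory Defs
  imports "HOL-Analysis.Analysis"
begin

end

theory Submission
  imports Defs
begin

lemma amgm_pow:
  fixes s :: real
  assumes "0 \<le> s" "j \<ge> 1"
  shows "real j * s^(j-1) \<le> (\<Sum>i<j. s^(2*i))"
proof -
  have re: "(\<Sum>i<j. s^(2*i)) = (\<Sum>i<j. s^(2*(j - Suc i)))"
    by (rule sum.nat_diff_reindex[symmetric])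
  have pt: "2 * s^(j-1) \<le> s^(2*i) + s^(2*(j - Suc i))" if "i < j" for i
  proof -
    have e: "s^(j-1) = s^i * s^(j - Suc i)" using that
      by (simp add: power_add[symmetric])
    have h1: "s^(2*i) = (s^i)^2" "s^(2*(j - Suc i)) = (s^(j - Suc i))^2"
      by (simp_all add: power_even_eq)
    have "0 \<le> (s^i - s^(j - Suc i))^2" by simp
    thus ?thesis unfolding e h1 by (simp add: power2_eq_square algebra_simps)
  qed
  have "2 * (real j * s^(j-1)) = (\<Sum>i<j. 2 * s^(j-1))" by simp
  also have "\<dots> \<le> (\<Sum>i<j. s^(2*i) + s^(2*(j - Suc i)))"
    by (rule sum_mono) (use pt in auto)
  also have "\<dots> = 2 * (\<Sum>i<j. s^(2*i))" using re by (simp add: sum.distrib)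
  finally show ?thesis by simp
qed

lemma aux_frac1: "(J::real) \<noteq> 0 \<Longrightarrow> A \<noteq> 0 \<Longrightarrow> B \<noteq> 0 \<Longrightarrow>
  x / J * (1/B) = (J*x*A)/(J^2*A*B)"
  by (simp add: field_simps power2_eq_square)

lemma aux_frac2: "(J::real) \<noteq> 0 \<Longrightarrow> A \<noteq> 0 \<Longrightarrow> B \<noteq> 0 \<Longrightarrow>
  y / A * (1/J^2) = (y*B)/(J^2*A*B)"
  by (simp add: field_simps power2_eq_square)

lemma term_bound:
  fixes s :: real
  assumes "0 < s" "s < 1"
  shows "(\<Sum>k<K. (s^(2*k+1))^j / real j) \<le> s / (1 - s^2) * (1 / (real j)^2)"
proof (cases "j = 0")
  case True thus ?thesis by simp
next
  case False
  hence j1: "j \<ge> 1" by simp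
  have s2: "0 < 1 - s^2" using assms by (simp add: power_less_one_iff abs_less_iff) 
  have a1: "s^(2*j) < 1" using assms False by (simp add: power_less_one_iff)
  have geo: "(\<Sum>k<K. (s^(2*j))^k) \<le> 1 / (1 - s^(2*j))"
  proof -
    have "(1 - s^(2*j)) * (\<Sum>k<K. (s^(2*j))^k) = 1 - (s^(2*j))^K"
      by (simp add: one_diff_power_eq)
    also have "\<dots> \<le> 1" using assms by simp
    finally show ?thesis using a1 by (simp add: field_simps)
  qed
  have "(\<Sum>k<K. (s^(2*k+1))^j / real j) = s^j / real j * (\<Sum>k<K. (s^(2*j))^k)"
    by (simp add: sum_distrib_left power_mult power_add power_mult_distrib algebra_simps
        flip: power_mult)
  also have "\<dots> \<le> s^j / real j * (1 / (1 - s^(2*j)))"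
    using geo assms by (intro mult_left_mono) auto
  also have "\<dots> \<le> s / (1 - s^2) * (1 / (real j)^2)"
  proof -
    have am: "real j * s^(j-1) \<le> (\<Sum>i<j. (s^2)^i)"
      using amgm_pow[OF _ j1, of s] assms by (simp add: power_mult)
    have eq: "1 - s^(2*j) = (1 - s^2) * (\<Sum>i<j. (s^2)^i)"
      by (simp add: one_diff_power_eq[symmetric] power_mult)
    have sj: "s^j = s * s^(j-1)" using j1 by (cases j) auto
    have "real j * s^j * (1 - s^2) \<le> s * (1 - s^(2*j))"
      unfolding eq sj using mult_left_mono[OF am, of "s * (1 - s^2)"] assms s2
      by (simp add: algebra_simps)
    hence le: "(real j * s^j * (1 - s^2)) / (real j^2 * (1-s^2) * (1 - s^(2*j)))
       \<le> (s * (1 - s^(2*j))) / (real j^2 * (1-s^2) * (1 - s^(2*j)))"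
      using s2 a1 j1 by (intro divide_right_mono) auto
    have nz: "1 - s^2 \<noteq> 0" "1 - s^(2*j) \<noteq> 0" "real j \<noteq> 0" using s2 a1 j1 by auto
    have e1: "s^j / real j * (1 / (1 - s^(2*j))) =
       (real j * s^j * (1 - s^2)) / (real j^2 * (1-s^2) * (1 - s^(2*j)))"
      using nz by (intro aux_frac1) auto
    have e2: "s / (1 - s^2) * (1 / (real j)^2) =
       (s * (1 - s^(2*j))) / (real j^2 * (1-s^2) * (1 - s^(2*j)))"
      using nz by (intro aux_frac2) auto
    show ?thesis unfolding e1 e2 by (rule le)
  qed
  finally show ?thesis .
qed

lemma log_bound:
  fixes s :: real
  assumes "0 < s" "s < 1"
  shows "(\<Sum>k<K. - ln (1 - s^(2*k+1))) \<le> s / (1 - s^2) * (pi^2/6)"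
proof -
  have ser: "(\<lambda>n. (s^(2*k+1))^n / real n) sums (- ln (1 - s^(2*k+1)))" for k
  proof -
    have "s^(2*k+1) < 1" using assms by (intro power_less_one_iff[THEN iffD2]) auto
    hence x1: "\<bar>- (s^(2*k+1))\<bar> < 1" using assms by simp
    from sums_minus[OF ln_series'[OF x1]] show ?thesis by simp
  qed
  have S: "(\<lambda>n. \<Sum>k<K. (s^(2*k+1))^n / real n) sums (\<Sum>k<K. - ln (1 - s^(2*k+1)))"
    by (rule sums_sum) (use ser in auto)
  have i2: "(\<lambda>n. 1 / (real n)^2) sums (pi^2/6)"
  proof -
    have "(\<lambda>n. 1 / (real (Suc n))^2) sums (pi^2/6)"
      using inverse_squares_sums by (simp add: add.commute)
    thus ?thesis by (subst (asm) sums_Suc_iff) simp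
  qed
  have G: "(\<lambda>n. s / (1 - s^2) * (1 / (real n)^2)) sums (s / (1 - s^2) * (pi^2/6))"
    by (rule sums_mult[OF i2])
  show ?thesis
    by (rule sums_le[OF _ S G]) (use term_bound[OF assms] in auto)
qed

lemma prod_bound:
  fixes s :: real
  assumes "0 < s" "s < 1"
  shows "exp (- (s / (1 - s^2) * (pi^2/6))) \<le> (\<Prod>k<K. 1 - s^(2*k+1))"
proof -
  have pos: "0 < 1 - s^(2*k+1)" for k
  proof -
    have "s^(2*k+1) < 1" using assms by (intro power_less_one_iff[THEN iffD2]) auto
    thus ?thesis by simp
  qed
  have P: "0 < (\<Prod>k<K. 1 - s^(2*k+1))" using pos by (intro prod_pos) auto
  have "ln (\<Prod>k<K. 1 - s^(2*k+1)) = (\<Sum>k<K. ln (1 - s^(2*k+1)))"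
  proof -
    have nz: "1 - s^(2*k+1) \<noteq> 0" for k using pos[of k] by linarith
    show ?thesis by (intro ln_prod) (use nz in auto)
  qed
  also have "\<dots> \<ge> - (s / (1 - s^2) * (pi^2/6))"
    using log_bound[OF assms, of K] by (simp add: sum_negf)
  finally have "- (s / (1 - s^2) * (pi^2/6)) \<le> ln (\<Prod>k<K. 1 - s^(2*k+1))" .
  hence "exp (- (s / (1 - s^2) * (pi^2/6))) \<le> exp (ln (\<Prod>k<K. 1 - s^(2*k+1)))"
    by simp
  thus ?thesis using exp_ln[OF P] by linarith
qed

lemma prod_split_nat: "prod (L :: nat \<Rightarrow> real) {..<n+K} = prod L {..<n} * prod (\<lambda>k. L (n+k)) {..<K}"
  by (induction K) (auto simp: mult.assoc)

lemma sum_half: "(\<Sum>m<n. real m + 1/2 - real n) = - (real n ^ 2) / 2"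
proof -
  have "(\<Sum>m<n. real m + 1/2) = real n ^ 2 / 2"
    by (induction n) (auto simp: power2_eq_square field_simps)
  thus ?thesis by (simp add: sum_subtractf power2_eq_square)
qed

lemma gen2: "2 * (u * (p/6)) = (p/3) * (u::real)" by simp

theorem lemma3:
  fixes \<alpha> :: real and n :: nat and q z :: complex
  assumes "\<alpha> > 0" and "n \<ge> 1" and "\<alpha> * real n > 1"
    and "0 < norm q" and "norm q \<le> 1 - 1 / (\<alpha> * real n)"
    and "norm z = norm q powr (- real n - 1/2)"
  shows "norm (\<Prod>m. (1 + z * q ^ (Suc m)))
           \<ge> norm q powr (- (real n ^ 2) / 2)
             * exp (- (pi^2/3) * sqrt (\<alpha> * real n * (\<alpha> * real n - 1)))"
proof -
  define N where "N = \<alpha> * real n"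
  define r where "r = norm q"
  define s where "s = sqrt r"
  define w where "w = norm z"
  define f where "f m = 1 + z * q ^ (Suc m)" for m
  have N1: "N > 1" using assms N_def by simp
  have r0: "0 < r" using assms r_def by simp
  have rN: "r \<le> 1 - 1/N" using assms r_def N_def by simp
  have r1: "r < 1" using rN N1 by (smt (verit) divide_pos_pos)
  have s0: "0 < s" and s1: "s < 1" using r0 r1 s_def by auto
  have ss: "s^2 = r" using r0 s_def by simp
  have w_eq: "w = r powr (- real n - 1/2)" using assms w_def r_def by simp
  have s_pow: "s^k = r powr (real k / 2)" for k
  proof -
    have "s = r powr (1/2)" using r0 s_def by (simp add: powr_half_sqrt)
    hence "s^k = r powr (real k * (1/2))" using r0 by (simp add: powr_power)
    thus ?thesis by simp
  qed
  have r_pow: "r^k = r powr (real k)" for k using r0 by (simp add: powr_realpow)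
  have nf: "norm (z * q ^ Suc m) = w * r^(Suc m)" for m
    by (simp add: w_def r_def norm_mult norm_power)
  define a where "a m = w * r^(Suc m)" for m
  define b where "b m = s^(2*(n - Suc m)+1)" for m
  define g where "g k = 1 - s^(2*k+1)" for k
  define L where "L m = (if m < n then a m * (1 - b m) else g (m - n))" for m
  have g0: "0 \<le> g k" for k
  proof -
    have "s^(2*k+1) < 1" using s0 s1 by (intro power_less_one_iff[THEN iffD2]) auto
    thus ?thesis by (simp add: g_def)
  qed
  have ab: "a m * b m = 1" if "m < n" for m
  proof -
    have e: "real (2*(n - Suc m)+1) = 2 * real n - 2 * real m - 1" using that by (simp add: of_nat_diff)
    have "a m * b m = r powr ((- real n - 1/2) + real (Suc m) + real (2*(n - Suc m)+1) / 2)"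
    proof -
      have "a m * b m = r powr (- real n - 1/2) * r powr (real (Suc m)) * r powr (real (2*(n - Suc m)+1) / 2)"
        by (simp only: a_def b_def w_eq r_pow s_pow)
      thus ?thesis by (simp only: powr_add)
    qed
    also have "(- real n - 1/2) + real (Suc m) + real (2*(n - Suc m)+1) / 2 = 0"
      unfolding e by (simp add: field_simps)
    finally show ?thesis using r0 by simp
  qed
  have a_ge: "a m = s^(2*(m-n)+1)" if "n \<le> m" for m
  proof -
    have e: "real (2*(m-n)+1) = 2 * real m - 2 * real n + 1" using that by (simp add: of_nat_diff)
    have "a m = r powr (- real n - 1/2) * r powr (real (Suc m))"
      by (simp only: a_def w_eq r_pow)
    also have "\<dots> = r powr ((- real n - 1/2) + real (Suc m))"
      by (rule powr_add[symmetric])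
    also have "(- real n - 1/2) + real (Suc m) = real (2*(m-n)+1) / 2" unfolding e by (simp add: field_simps)
    finally have "a m = r powr (real (2*(m-n)+1) / 2)" .
    thus ?thesis by (simp only: s_pow)
  qed
  have L_le: "0 \<le> L m \<and> L m \<le> norm (f m)" for m
  proof (cases "m < n")
    case True
    have b0: "0 \<le> b m" using s0 by (simp add: b_def)
    have b1: "b m \<le> 1" unfolding b_def using s0 s1 by (intro power_le_one) auto
    have a0: "0 \<le> a m" using r0 w_eq by (simp add: a_def)
    have "norm (z * q ^ Suc m) - norm (1::complex) \<le> norm (z * q ^ Suc m + 1)" by (rule norm_diff_ineq)
    hence "a m - 1 \<le> norm (f m)" unfolding nf a_def[symmetric] f_def by (simp add: add.commute)
    moreover have "a m - 1 = a m * (1 - b m)" using ab[OF True] by (simp add: algebra_simps)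
    ultimately show ?thesis using True a0 b1 by (simp add: L_def)
  next
    case False
    have "norm (1::complex) - norm (z * q ^ Suc m) \<le> norm (1 + z * q ^ Suc m)"
      by (rule norm_diff_ineq)
    hence "1 - a m \<le> norm (f m)" unfolding nf a_def[symmetric] f_def by simp
    hence "g (m - n) \<le> norm (f m)" using a_ge[of m] False
      by (simp add: g_def)
    thus ?thesis using False g0 by (simp add: L_def)
  qed
  define C where "C = s / (1 - s^2) * (pi^2/6)"
  define X where "X = exp (- C)"
  have Pg: "X \<le> prod g {..<K}" for K unfolding X_def C_def g_def by (rule prod_bound[OF s0 s1])
  have X0: "0 \<le> X" by (simp add: X_def)
  have prod_a: "prod a {..<n} = r powr (- (real n ^ 2) / 2)"
  proof -
    have "prod a {..<n} = (\<Prod>m<n. r powr (real m + 1/2 - real n))"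
    proof (rule prod.cong)
      fix m assume "m \<in> {..<n}"
      have "a m = r powr (- real n - 1/2) * r powr (real (Suc m))"
        by (simp only: a_def w_eq r_pow)
      also have "\<dots> = r powr ((- real n - 1/2) + real (Suc m))"
        by (rule powr_add[symmetric])
      also have "(- real n - 1/2) + real (Suc m) = real m + 1/2 - real n" by simp
      finally show "a m = r powr (real m + 1/2 - real n)" .
    qed simp
    also have "\<dots> = r powr (\<Sum>m<n. real m + 1/2 - real n)"
      using r0 by (simp add: powr_sum)
    finally show ?thesis by (simp add: sum_half)
  qed
  have prod_1b: "(\<Prod>m<n. 1 - b m) = prod g {..<n}"
    unfolding b_def g_def by (rule prod.nat_diff_reindex)
  have Lfirst: "prod L {..<n} = r powr (- (real n ^ 2) / 2) * prod g {..<n}"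
  proof -
    have "prod L {..<n} = (\<Prod>m<n. a m * (1 - b m))" by (rule prod.cong) (auto simp: L_def)
    thus ?thesis by (simp add: prod.distrib prod_a prod_1b)
  qed
  have Lsecond: "(\<Prod>k<K. L (n+k)) = prod g {..<K}" for K
    by (rule prod.cong) (auto simp: L_def)
  have sqN: "s / (1 - s^2) \<le> sqrt (N * (N - 1))"
  proof (rule real_le_rsqrt)
    have d: "1 - r \<ge> 1/N" using rN by simp
    have d0: "0 < 1 - r" using r1 by simp
    have "(s / (1 - s^2))^2 = r / (1 - r)^2" using ss by (simp add: power_divide)
    also have "\<dots> \<le> r / (1/N)^2"
      using d d0 r0 N1 by (intro divide_left_mono power_mono mult_pos_pos) auto
    also have "\<dots> = r * N^2" by (simp add: power_divide)
    also have "\<dots> \<le> (1 - 1/N) * N^2" using rN N1 by (intro mult_right_mono) auto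
    also have "\<dots> = N * (N - 1)" using N1 by (simp add: power2_eq_square field_simps)
    finally show "(s / (1 - s^2))^2 \<le> N * (N - 1)" .
  qed
  have XX: "exp (- (pi^2/3) * sqrt (N * (N - 1))) \<le> X * X"
  proof -
    have eq: "X * X = exp (- (2*C))" by (simp add: X_def exp_add[symmetric])
    have le2: "2 * C \<le> (pi^2/3) * sqrt (N * (N - 1))"
    proof -
      have "2 * C = (pi^2/3) * (s / (1 - s^2))" unfolding C_def by (rule gen2)
      thus ?thesis using mult_left_mono[OF sqN, of "pi^2/3"] by simp
    qed
    have "- (pi^2/3) * sqrt (N * (N - 1)) \<le> - (2*C)" using le2 by linarith
    hence "exp (- (pi^2/3) * sqrt (N * (N - 1))) \<le> exp (- (2*C))"
      by (rule exp_le_cancel_iff[THEN iffD2])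
    thus ?thesis unfolding eq .
  qed
  define B where "B = r powr (- (real n ^ 2) / 2) * exp (- (pi^2/3) * sqrt (N * (N - 1)))"
  have partial: "B \<le> norm (prod f {..<M})" if nM: "n \<le> M" for M
  proof -
    obtain K where K: "M = n + K" using le_Suc_ex[OF nM] by (elim exE) simp
    have E0: "0 \<le> r powr (- (real n ^ 2) / 2)" by simp
    have "B \<le> r powr (- (real n ^ 2) / 2) * (X * X)"
      unfolding B_def using XX E0 by (rule mult_left_mono)
    also have "\<dots> \<le> r powr (- (real n ^ 2) / 2) * (prod g {..<n} * prod g {..<K})"
    proof (rule mult_left_mono[OF _ E0])
      have "0 \<le> prod g {..<n}" by (rule prod_nonneg) (use g0 in auto)
      thus "X * X \<le> prod g {..<n} * prod g {..<K}"
        by (rule mult_mono[OF Pg Pg _ X0])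
    qed
    also have "\<dots> = prod L {..<M}"
      unfolding K prod_split_nat Lfirst Lsecond by (simp add: mult.assoc)
    also have "\<dots> \<le> (\<Prod>m<M. norm (f m))"
      using L_le by (intro prod_mono) auto
    also have "\<dots> = norm (prod f {..<M})" by (rule prod_norm)
    finally show ?thesis .
  qed
  have summ: "summable (\<lambda>i. norm (f i - 1))"
  proof -
    have "summable (\<lambda>i. (w * r) * r^i)" using r0 r1 by (intro summable_mult summable_geometric) auto
    moreover have "(\<lambda>i. norm (f i - 1)) = (\<lambda>i. (w * r) * r^i)"
    proof (rule ext)
      fix i
      have "norm (f i - 1) = norm (z * q ^ Suc i)" by (simp add: f_def)
      also have "\<dots> = w * r ^ Suc i" by (rule nf)
      finally show "norm (f i - 1) = (w * r) * r^i" by (simp add: mult.assoc)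
    qed
    ultimately show ?thesis by simp
  qed
  have cp: "convergent_prod f"
    by (rule abs_convergent_prod_imp_convergent_prod[OF summable_imp_abs_convergent_prod[OF summ]])
  have lim: "(\<lambda>M. norm (\<Prod>i\<le>M. f i)) \<longlonglongrightarrow> norm (prodinf f)"
    by (intro tendsto_norm convergent_prod_LIMSEQ cp)
  have "B \<le> norm (prodinf f)"
  proof (rule LIMSEQ_le_const[OF lim])
    show "\<exists>N. \<forall>M\<ge>N. B \<le> norm (\<Prod>i\<le>M. f i)"
    proof (intro exI allI impI)
      fix M assume "n \<le> M"
      hence "B \<le> norm (prod f {..<Suc M})" by (intro partial) simp
      thus "B \<le> norm (\<Prod>i\<le>M. f i)" by (simp only: lessThan_Suc_atMost)
    qed
  qed
  moreover have fe: "f = (\<lambda>m. 1 + z * q ^ (Suc m))" by (intro ext) (simp only: f_def)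
  ultimately show ?thesis by (simp only: B_def r_def N_def)
qed

end
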